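(* Let $d\ge 10$ and $a>0$, and let $u=u(a,\cdot)$ be the solution of $$y^{2}(1-y^{2})u''+\big((d-3)y-2y^{3}\big)u'+(d-2)u(1-u^{2})=0$$ with $u(y)=1-ay^{2}+O(y^{4})$ as $y\to0$. Then $u$ is monotone decreasing on $[0,1]$, from $u(0)=1$ to $u(1)>0$, where $u(1):=\lim_{y\to1^-}u(y)$.
   Context: For each $a\ge0$ there is a unique solution $u(a,y)$ of the equation, analytic in $(a,y)$ near $y=0$, with expansion $u(a,y)=1-ay^2+O(y^4)$ near $y=0$. This solution extends to a solution on $[0,1)$ with $|u|<1$ for $a>0$, and the limits $\lim_{y\to1^-}u(a,y)$ and $\lim_{y\to1^-}u'(a,y)$ exist and are finite; $u(1)$ and $u'(1)$ denote these limits. *)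

theory Defs
  imports "HOL-Analysis.Analysis" "HOL-Library.Landau_Symbols"
begin

end

theory Submission
  imports Defs
begin


lemma blowup:
  fixes f f' :: "real \<Rightarrow> real"
  assumes y1: "0 < y1" and c: "c > 0"
  and der: "\<And>y. 0 < y \<Longrightarrow> y \<le> y1 \<Longrightarrow> (f has_real_derivative f' y) (at y)"
  and ge: "\<And>y. 0 < y \<Longrightarrow> y \<le> y1 \<Longrightarrow> f' y \<ge> c / y^2"
  and bd: "\<And>y. 0 < y \<Longrightarrow> y \<le> y1 \<Longrightarrow> f y \<ge> B"
  shows False
proof -
  define R where "R = \<bar>f y1\<bar> + c/y1 + \<bar>B\<bar> + 1"
  have R: "R > 0" using y1 c by (simp add: R_def add_nonneg_pos add_pos_nonneg)
  define y where "y = min y1 (c/(2*R))"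
  have y: "0 < y" "y \<le> y1" using y1 c R by (auto simp: y_def)
  have "(\<lambda>t. f t + c / t) y \<le> (\<lambda>t. f t + c / t) y1"
  proof (rule DERIV_nonneg_imp_nondecreasing[OF y(2)])
    fix x assume x: "y \<le> x" "x \<le> y1"
    then have x0: "x > 0" using y by simp
    have "((\<lambda>t. f t + c / t) has_real_derivative f' x - c / x^2) (at x)"
      using der[OF x0 x(2)] x0 by (auto intro!: derivative_eq_intros simp: power2_eq_square field_simps)
    moreover have "f' x - c / x^2 \<ge> 0" using ge[OF x0 x(2)] by simp
    ultimately show "\<exists>y. ((\<lambda>t. f t + c / t) has_real_derivative y) (at x) \<and> 0 \<le> y" by blast
  qed
  then have 1: "f y + c / y \<le> f y1 + c / y1" by simp
  have "y \<le> c/(2*R)" by (simp add: y_def)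
  then have "2*R \<le> c / y" using y R c by (simp add: field_simps)
  moreover have "f y \<ge> B" using bd y by simp
  moreover have "f y1 \<le> \<bar>f y1\<bar>" "- \<bar>B\<bar> \<le> B" by auto
  ultimately show False using 1 R unfolding R_def by argo
qed

lemma ev_left_pt:
  assumes ev: "eventually P (at (x::real))" and x: "0 < x"
  shows "\<exists>t. 0 < t \<and> t < x \<and> P t"
proof -
  obtain e where e: "e > 0" and he: "\<And>t. t \<noteq> x \<Longrightarrow> dist t x < e \<Longrightarrow> P t"
    using ev unfolding eventually_at by auto
  define t where "t = max (x/2) (x - e/2)"
  have "0 < t" "t < x" "dist t x < e" using e x by (auto simp: t_def dist_real_def)
  then show ?thesis using he by force
qed

lemma ev_right_int:
  assumes ev: "eventually P (at (x::real))"
  shows "\<exists>e>0. \<forall>t. x < t \<and> t < x + e \<longrightarrow> P t"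
proof -
  obtain e where e: "e > 0" and he: "\<And>t. t \<noteq> x \<Longrightarrow> dist t x < e \<Longrightarrow> P t"
    using ev unfolding eventually_at by auto
  show ?thesis using e he by (intro exI[of _ e]) (auto simp: dist_real_def)
qed

locale ym =
  fixes d :: nat and a :: real and u u' u'' :: "real \<Rightarrow> real"
  assumes d: "d \<ge> 10" and a: "a > 0"
    and u0: "u 0 = 1"
    and d1: "\<And>y. y \<in> {0<..<1} \<Longrightarrow> (u has_real_derivative u' y) (at y)"
    and d2: "\<And>y. y \<in> {0<..<1} \<Longrightarrow> (u' has_real_derivative u'' y) (at y)"
    and ode: "\<And>y. y \<in> {0<..<1} \<Longrightarrow>
      y\<^sup>2 * (1 - y\<^sup>2) * u'' y + ((real d - 3) * y - 2 * y ^ 3) * u' y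
        + (real d - 2) * u y * (1 - (u y)\<^sup>2) = 0"
    and expn: "(\<lambda>y. u y - (1 - a * y\<^sup>2)) \<in> O[at_right 0](\<lambda>y. y ^ 4)"
begin

definition "e = (real d - 5) / 2"
definition "w y = y ^ (d - 3) / (1 - y\<^sup>2) powr e"
definition "F y = (real d - 2) * u y * (1 - (u y)\<^sup>2) / (y\<^sup>2 * (1 - y\<^sup>2))"

lemma near0: "\<exists>\<delta>>0. \<delta> \<le> 1/2 \<and> (\<forall>y. 0 < y \<and> y < \<delta> \<longrightarrow>
   a*y\<^sup>2/2 \<le> 1 - u y \<and> 1 - u y \<le> 3*a*y\<^sup>2/2 \<and> 1/2 \<le> u y)"
proof -
  obtain C where C: "C > 0" and ev: "eventually (\<lambda>y. norm (u y - (1 - a * y\<^sup>2)) \<le> C * norm (y ^ 4)) (at_right 0)"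
    using landau_o.bigE[OF expn] by blast
  then obtain b where b: "b > 0" and hb: "\<And>y. 0 < y \<Longrightarrow> y < b \<Longrightarrow> \<bar>u y - (1 - a * y\<^sup>2)\<bar> \<le> C * y^4"
    unfolding eventually_at_right_field by auto
  define \<delta> where "\<delta> = min b (min (1/2) (min (a/(2*C)) (1/(3*a))))"
  have dp: "\<delta> > 0" using b C a by (simp add: \<delta>_def)
  show ?thesis
  proof (intro exI[of _ \<delta>] conjI allI impI)
    show "\<delta> > 0" "\<delta> \<le> 1/2" using dp by (auto simp: \<delta>_def)
    fix y assume y: "0 < y \<and> y < \<delta>"
    then have yb: "y < b" and y2: "y < 1/2" and y3: "y < a/(2*C)" and y4: "y < 1/(3*a)"
      by (auto simp: \<delta>_def)
    have h: "\<bar>u y - (1 - a * y\<^sup>2)\<bar> \<le> C * y^4" using hb y yb by auto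
    have "y^2 \<le> y" using y y2 by (simp add: power2_eq_square mult_le_cancel_right1 less_imp_le)
    then have "C * y^2 \<le> C * y" using C by simp
    also have "\<dots> \<le> a/2" using y3 C by (simp add: field_simps)
    finally have "C * y^2 * y^2 \<le> a/2 * y^2"
      by (rule mult_right_mono) simp
    then have "C*y^4 \<le> a/2 * y^2"
      by (simp add: power2_eq_square power4_eq_xxxx mult.assoc)
    moreover have "3*a*y^2/2 \<le> 1/2"
    proof -
      have "3*a*y^2 \<le> 3*a*y" using \<open>y^2 \<le> y\<close> a by simp
      also have "\<dots> \<le> 1" using y4 a by (simp add: field_simps)
      finally show ?thesis by simp
    qed
    ultimately show "a*y\<^sup>2/2 \<le> 1 - u y" "1 - u y \<le> 3*a*y\<^sup>2/2" "1/2 \<le> u y" using h by auto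
  qed
qed

lemma e_val: "2 * e = real d - 5" by (simp add: e_def)

lemma w_deriv:
  assumes y: "0 < y" "y < 1"
  shows "(w has_real_derivative w y * ((real d - 3)/y + (real d - 5)*y/(1-y\<^sup>2))) (at y)"
proof -
  have s: "1 - y\<^sup>2 > 0" using y by (simp add: abs_square_less_1)
  define P where "P = (1-y\<^sup>2) powr e"
  have P: "P > 0" using s by (simp add: P_def)
  have 1: "((\<lambda>y. (1-y\<^sup>2) powr e) has_real_derivative e * (1-y\<^sup>2) powr (e - of_nat 1) * (0 - 2*y)) (at y)"
    by (rule DERIV_fun_powr[where g="\<lambda>y. 1 - y\<^sup>2", OF _ s]) (auto intro!: derivative_eq_intros)
  have pe: "(1-y\<^sup>2) powr (e - of_nat 1) = P / (1 - y\<^sup>2)"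
    using s by (simp add: P_def powr_diff)
  have 2: "((\<lambda>y. y^(d-3)) has_real_derivative real (d-3) * y^(d-3-1)) (at y)"
    by (auto intro!: derivative_eq_intros)
  have q: "(w has_real_derivative (real (d-3) * y^(d-3-1) * P - (e * P / (1-y\<^sup>2) * (0 - 2*y)) * y^(d-3)) / P ^ Suc (Suc 0)) (at y)"
    unfolding w_def[abs_def] using DERIV_quotient[OF 2 1] P pe by (simp add: P_def)
  have yy: "y^(d-3) = y * y^(d-3-1)"
  proof -
    have "d-3 = Suc (d-3-1)" using d by simp
    then show ?thesis by (metis power_Suc)
  qed
  have rd: "real (d-3) = real d - 3" using d by (simp add: of_nat_diff)
  have "(real (d-3) * y^(d-3-1) * P - (e * P / (1-y\<^sup>2) * (0 - 2*y)) * y^(d-3)) / P ^ Suc (Suc 0)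
      = w y * ((real d - 3)/y + (real d - 5)*y/(1-y\<^sup>2))"
    unfolding w_def P_def[symmetric] yy rd e_val[symmetric] using y s P
    by (simp add: field_simps power2_eq_square)
  with q show ?thesis by simp
qed

lemma ode_F:
  assumes y: "0 < y" "y < 1"
  shows "u'' y + ((real d - 3)/y + (real d - 5)*y/(1-y\<^sup>2)) * u' y = - F y"
proof -
  have s: "1 - y\<^sup>2 > 0" using y by (simp add: abs_square_less_1)
  have o: "y\<^sup>2 * (1 - y\<^sup>2) * u'' y + ((real d - 3) * y - 2 * y ^ 3) * u' y
        + (real d - 2) * u y * (1 - (u y)\<^sup>2) = 0" using ode y by auto
  have yp: "y\<^sup>2 * (1 - y\<^sup>2) > 0" using s y by simp
  have "(u'' y + ((real d - 3)/y + (real d - 5)*y/(1-y\<^sup>2)) * u' y) * (y\<^sup>2 * (1 - y\<^sup>2))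
     = y\<^sup>2 * (1 - y\<^sup>2) * u'' y + ((real d - 3) * y - 2 * y ^ 3) * u' y"
    using y s by (simp add: field_simps power2_eq_square power3_eq_cube)
  also have "\<dots> = - F y * (y\<^sup>2 * (1 - y\<^sup>2))"
  proof -
    have "F y * (y\<^sup>2 * (1 - y\<^sup>2)) = (real d - 2) * u y * (1 - (u y)\<^sup>2)"
      using yp nonzero_eq_divide_eq[of "y\<^sup>2 * (1 - y\<^sup>2)" "F y"] unfolding F_def by auto
    then show ?thesis using o by linarith
  qed
  finally show ?thesis using yp by (metis mult_right_cancel less_irrefl mult_minus_left)
qed

definition "h y = w y * u' y"

lemma h_deriv:
  assumes y: "0 < y" "y < 1"
  shows "(h has_real_derivative - w y * F y) (at y)"
proof -
  have "(h has_real_derivative w y * u'' y + w y * ((real d - 3)/y + (real d - 5)*y/(1-y\<^sup>2)) * u' y) (at y)"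
    unfolding h_def[abs_def] by (rule DERIV_mult'[OF w_deriv[OF y] d2]) (use y in auto)
  moreover have "w y * u'' y + w y * ((real d - 3)/y + (real d - 5)*y/(1-y\<^sup>2)) * u' y = - w y * F y"
    using ode_F[OF y] by (metis (no_types, lifting) distrib_left mult.assoc mult_minus_right mult_minus_left)
  ultimately show ?thesis by simp
qed

lemma e_nonneg: "e \<ge> 0" using d by (simp add: e_def)

lemma w_pos: "0 < y \<Longrightarrow> y < 1 \<Longrightarrow> w y > 0"
proof -
  assume y: "0 < y" "y < 1"
  then have "1 - y\<^sup>2 > 0" by (simp add: abs_square_less_1)
  then have "(1 - y\<^sup>2) powr e > 0" by simp
  then show ?thesis unfolding w_def using y by simp
qed

definition "Bw = 1 / ((3/4) powr e)"

lemma Bw_pos: "Bw > 0" by (simp add: Bw_def)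

lemma w_bounds:
  assumes y: "0 < y" "y \<le> 1/2"
  shows "y^(d-3) \<le> w y" "w y \<le> Bw * y^(d-3)"
proof -
  have s1: "1 - y\<^sup>2 \<le> 1" "1 - y\<^sup>2 \<ge> 3/4"
  proof -
    have "y\<^sup>2 \<le> (1/2)\<^sup>2" using y by (intro power_mono) auto
    then show "1 - y\<^sup>2 \<ge> 3/4" by (simp add: power2_eq_square)
  qed simp
  have P1: "(1 - y\<^sup>2) powr e \<le> 1" using s1 e_nonneg by (intro powr_le1) auto
  have P2: "(3/4) powr e \<le> (1 - y\<^sup>2) powr e" using s1 e_nonneg by (intro powr_mono2) auto
  have Pp: "(1 - y\<^sup>2) powr e > 0" using s1 by simp
  have yp: "y^(d-3) > 0" using y by simp
  show "y^(d-3) \<le> w y" unfolding w_def using P1 Pp yp by (simp add: field_simps)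
  show "w y \<le> Bw * y^(d-3)" unfolding w_def Bw_def using P2 Pp yp
    by (simp add: field_simps mult_left_mono)
qed

lemma pow_le_sq: "0 < (t::real) \<Longrightarrow> t \<le> 1 \<Longrightarrow> t^(d-3) \<le> t\<^sup>2"
  using d power_decreasing[of 2 "d-3" t] by auto

lemma pow_d2: "(t::real)^(d-2) = t * t^(d-3)"
proof -
  have "d-2 = Suc (d-3)" using d by simp
  then show ?thesis by (metis power_Suc)
qed

lemma near0_F: "\<exists>\<delta>>0. \<delta> \<le> 1/2 \<and> (\<forall>y. 0 < y \<and> y < \<delta> \<longrightarrow>
   0 < F y \<and> F y \<le> 4*a*(real d - 2) \<and> 1/2 \<le> u y \<and> u y < 1)"
proof -
  obtain \<delta> where \<delta>: "\<delta>>0" "\<delta> \<le> 1/2" and hb: "\<And>y. 0<y \<Longrightarrow> y<\<delta> \<Longrightarrow>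
      a*y\<^sup>2/2 \<le> 1 - u y \<and> 1 - u y \<le> 3*a*y\<^sup>2/2 \<and> 1/2 \<le> u y"
    using near0 by blast
  show ?thesis
  proof (intro exI[of _ \<delta>] conjI allI impI)
    show "\<delta> > 0" "\<delta> \<le> 1/2" using \<delta> by auto
    fix y assume y: "0 < y \<and> y < \<delta>"
    have b: "a*y\<^sup>2/2 \<le> 1 - u y" "1 - u y \<le> 3*a*y\<^sup>2/2" "1/2 \<le> u y" using hb y by auto
    have yp: "y\<^sup>2 > 0" using y by simp
    have "a*y\<^sup>2/2 > 0" using a yp by simp
    then have ult: "u y < 1" using b by linarith
    have s: "1 - y\<^sup>2 \<ge> 3/4"
    proof -
      have "y\<^sup>2 \<le> (1/2)\<^sup>2" using y \<delta> by (intro power_mono) auto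
      then show ?thesis by (simp add: power2_eq_square)
    qed
    have num: "u y * (1 - (u y)\<^sup>2) = (u y * (1 + u y)) * (1 - u y)"
      by (simp add: power2_eq_square algebra_simps)
    have p1: "u y * (1 + u y) > 0" using b by simp
    have p2: "u y * (1 + u y) \<le> 2"
    proof -
      have "u y * (1 + u y) \<le> 1 * (1 + 1)" using b ult by (intro mult_mono) auto
      then show ?thesis by simp
    qed
    have pos: "0 < u y * (1 - (u y)\<^sup>2)" unfolding num using p1 ult by simp
    have le: "u y * (1 - (u y)\<^sup>2) \<le> 2 * (3*a*y\<^sup>2/2)"
      unfolding num using p1 p2 b ult by (intro mult_mono) auto
    have dd: "real d - 2 > 0" using d by simp
    have den: "y\<^sup>2 * (1 - y\<^sup>2) > 0" using yp s by simp
    have Fe: "F y = (real d - 2) * (u y * (1 - (u y)\<^sup>2)) / (y\<^sup>2 * (1 - y\<^sup>2))"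
      unfolding F_def by (simp add: mult.assoc)
    show "0 < F y" unfolding Fe using dd pos den by simp
    have "F y \<le> (real d - 2) * (2 * (3*a*y\<^sup>2/2)) / (y\<^sup>2 * (3/4))"
      unfolding Fe
    proof (rule frac_le)
      show "0 \<le> (real d - 2) * (2 * (3*a*y\<^sup>2/2))" using dd a by simp
      show "(real d - 2) * (u y * (1 - (u y)\<^sup>2)) \<le> (real d - 2) * (2 * (3*a*y\<^sup>2/2))"
        using dd le by simp
      show "0 < y\<^sup>2 * (3/4)" using yp by simp
      show "y\<^sup>2 * (3/4) \<le> y\<^sup>2 * (1 - y\<^sup>2)" using yp s by simp
    qed
    also have "\<dots> = 4*a*(real d - 2)" using yp by (simp add: field_simps)
    finally show "F y \<le> 4*a*(real d - 2)" .
    show "1/2 \<le> u y" "u y < 1" using b ult by auto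
  qed
qed

lemma near0_full: "\<exists>\<delta>>0. \<delta> \<le> 1/2 \<and> (\<forall>y. 0 < y \<and> y < \<delta> \<longrightarrow>
   u' y < 0 \<and> y * u' y + 3 * u y > 0 \<and> u y < 1)"
proof -
  define M where "M = 4*a*(real d - 2)"
  obtain \<delta> where \<delta>: "\<delta>>0" "\<delta> \<le> 1/2" and hb: "\<And>y. 0<y \<Longrightarrow> y<\<delta> \<Longrightarrow>
      0 < F y \<and> F y \<le> M \<and> 1/2 \<le> u y \<and> u y < 1"
    using near0_F unfolding M_def by blast
  have M: "M > 0" using a d by (simp add: M_def)
  define K where "K = Bw * M"
  have K: "K > 0" using M Bw_pos by (simp add: K_def)
  have tl: "\<And>t. t < \<delta> \<Longrightarrow> t < 1" using \<delta> by simp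
  have up: "h y1 \<le> K*y1^(d-2)" if y1: "0<y1" "y1<\<delta>" for y1
  proof (rule ccontr)
    assume nle: "\<not> h y1 \<le> K*y1^(d-2)"
    define ee where "ee = h y1 - K*y1^(d-2)"
    have ee: "ee > 0" using nle by (simp add: ee_def)
    have km: "h t - K*t^(d-2) \<ge> ee" if t: "0<t" "t \<le> y1" for t
    proof -
      have "(\<lambda>t. h t - K*t^(d-2)) t \<ge> (\<lambda>t. h t - K*t^(d-2)) y1"
      proof (rule DERIV_nonpos_imp_nonincreasing[OF t(2)])
        fix x assume x: "t \<le> x" "x \<le> y1"
        have x0: "0 < x" "x < 1" using x t y1 tl by auto
        have "((\<lambda>t. h t - K*t^(d-2)) has_real_derivative (- w x * F x - K * (real (d-2) * x^(d-2 - Suc 0)))) (at x)"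
          by (intro DERIV_diff h_deriv[OF x0] DERIV_cmult DERIV_pow)
        moreover have "- w x * F x - K * (real (d-2) * x^(d-2 - Suc 0)) \<le> 0"
        proof -
          have "w x * F x > 0" using w_pos[OF x0] hb[of x] x0 x y1 by simp
          moreover have "K * (real (d-2) * x^(d-2 - Suc 0)) \<ge> 0" using K x0 by simp
          ultimately show ?thesis by simp
        qed
        ultimately show "\<exists>y. ((\<lambda>t. h t - K*t^(d-2)) has_real_derivative y) (at x) \<and> y \<le> 0" by blast
      qed
      then show ?thesis by (simp add: ee_def)
    qed
    show False
    proof (rule blowup[of y1 "ee/Bw" u u' "1/2"])
      show "0 < y1" "0 < ee/Bw" using y1 ee Bw_pos by auto
      fix t assume t: "0 < t" "t \<le> y1"
      have t1: "0 < t" "t < 1" using t y1 tl by auto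
      show "(u has_real_derivative u' t) (at t)" using d1 t1 by auto
      show "1/2 \<le> u t" using hb t y1 by auto
      have ht: "h t \<ge> ee" using km[OF t] K t by (smt (verit) zero_le_power mult_nonneg_nonneg)
      have wp: "w t > 0" using w_pos t1 by auto
      have ue: "u' t = h t / w t" using wp by (simp add: h_def)
      have wb: "w t \<le> Bw * t\<^sup>2"
      proof -
        have th: "t \<le> 1/2" using t y1 \<delta> by simp
        have "w t \<le> Bw * t^(d-3)" using w_bounds(2)[OF t(1) th] .
        also have "\<dots> \<le> Bw * t\<^sup>2" using pow_le_sq[of t] th t Bw_pos by (intro mult_left_mono) auto
        finally show ?thesis .
      qed
      have "ee / Bw / t\<^sup>2 = ee / (Bw * t\<^sup>2)" by simp
      also have "\<dots> \<le> ee / w t" using wp wb ee by (intro divide_left_mono) auto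
      also have "\<dots> \<le> h t / w t" using ht wp by (intro divide_right_mono) auto
      finally show "ee / Bw / t\<^sup>2 \<le> u' t" using ue by simp
    qed
  qed
  have low: "- K*y1^(d-2) \<le> h y1" if y1: "0<y1" "y1<\<delta>" for y1
  proof (rule ccontr)
    assume nle: "\<not> - K*y1^(d-2) \<le> h y1"
    define ee where "ee = - (h y1 + K*y1^(d-2))"
    have ee: "ee > 0" using nle by (simp add: ee_def)
    have km: "h t + K*t^(d-2) \<le> - ee" if t: "0<t" "t \<le> y1" for t
    proof -
      have "(\<lambda>t. h t + K*t^(d-2)) t \<le> (\<lambda>t. h t + K*t^(d-2)) y1"
      proof (rule DERIV_nonneg_imp_nondecreasing[OF t(2)])
        fix x assume x: "t \<le> x" "x \<le> y1"
        have x0: "0 < x" "x < 1" using x t y1 tl by auto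
        have "((\<lambda>t. h t + K*t^(d-2)) has_real_derivative (- w x * F x + K * (real (d-2) * x^(d-2 - Suc 0)))) (at x)"
          by (intro DERIV_add h_deriv[OF x0] DERIV_cmult DERIV_pow)
        moreover have "- w x * F x + K * (real (d-2) * x^(d-2 - Suc 0)) \<ge> 0"
        proof -
          have eq: "d - 2 - Suc 0 = d - 3" by simp
          have xh: "x \<le> 1/2" using x0 x y1 \<delta> by auto
          have Fb: "0 < F x" "F x \<le> M" using hb[of x] x0 x y1 by auto
          have "w x * F x \<le> (Bw * x^(d-3)) * M"
            using w_bounds(2)[OF x0(1) xh] Fb w_pos[OF x0] by (intro mult_mono) auto
          also have "\<dots> = K * x^(d-3)" by (simp add: K_def)
          also have "\<dots> \<le> K * (real (d-2) * x^(d-3))"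
            using K x0 d by (intro mult_left_mono) auto
          finally show ?thesis unfolding eq by simp
        qed
        ultimately show "\<exists>y. ((\<lambda>t. h t + K*t^(d-2)) has_real_derivative y) (at x) \<and> 0 \<le> y" by blast
      qed
      then show ?thesis by (simp add: ee_def)
    qed
    show False
    proof (rule blowup[of y1 "ee/Bw" "\<lambda>t. - u t" "\<lambda>t. - u' t" "-1"])
      show "0 < y1" "0 < ee/Bw" using y1 ee Bw_pos by auto
      fix t assume t: "0 < t" "t \<le> y1"
      have t1: "0 < t" "t < 1" using t y1 tl by auto
      show "((\<lambda>t. - u t) has_real_derivative - u' t) (at t)" using d1 t1 by (auto intro: DERIV_minus)
      show "-1 \<le> - u t" using hb[of t] t y1 by fastforce
      have ht: "- h t \<ge> ee" using km[OF t] K t by (smt (verit) zero_le_power mult_nonneg_nonneg)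
      have wp: "w t > 0" using w_pos t1 by auto
      have ue: "- u' t = - h t / w t" using wp by (simp add: h_def)
      have wb: "w t \<le> Bw * t\<^sup>2"
      proof -
        have th: "t \<le> 1/2" using t y1 \<delta> by simp
        have "w t \<le> Bw * t^(d-3)" using w_bounds(2)[OF t(1) th] .
        also have "\<dots> \<le> Bw * t\<^sup>2" using pow_le_sq[of t] th t Bw_pos by (intro mult_left_mono) auto
        finally show ?thesis .
      qed
      have "ee / Bw / t\<^sup>2 = ee / (Bw * t\<^sup>2)" by simp
      also have "\<dots> \<le> ee / w t" using wp wb ee by (intro divide_left_mono) auto
      also have "\<dots> \<le> - h t / w t" using ht wp by (intro divide_right_mono) auto
      finally show "ee / Bw / t\<^sup>2 \<le> - u' t" using ue by simp
    qed
  qed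
  have ub: "\<bar>u' y\<bar> \<le> K * y" if y: "0<y" "y<\<delta>" for y
  proof -
    have y1: "0 < y" "y < 1" using y tl by auto
    have wp: "w t > 0" if "0<t" "t<1" for t using w_pos that by auto
    have "\<bar>h y\<bar> \<le> K * y * y^(d-3)" using up[OF y] low[OF y] pow_d2[of y] by (simp add: mult.assoc abs_le_iff)
    also have "\<dots> \<le> K * y * w y" using w_bounds(1)[of y] y \<delta> K by (intro mult_left_mono) auto
    finally have "\<bar>u' y\<bar> * w y \<le> K * y * w y" using wp[OF y1] by (simp add: h_def abs_mult)
    then show ?thesis using wp[OF y1] by simp
  qed
  have hdec: "h t2 < h t1" if "0 < t1" "t1 < t2" "t2 < \<delta>" for t1 t2
  proof (rule DERIV_neg_imp_decreasing[OF that(2)])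
    fix x assume x: "t1 \<le> x" "x \<le> t2"
    have x0: "0 < x" "x < 1" using x that tl by auto
    have "- w x * F x < 0" using w_pos[OF x0] hb[of x] x0 x that by simp
    then show "\<exists>y. (h has_real_derivative y) (at x) \<and> y < 0" using h_deriv[OF x0] by blast
  qed
  have hle: "h y \<le> 0" if y: "0<y" "y<\<delta>" for y
  proof -
    show "h y \<le> 0"
    proof (rule ccontr)
      assume "\<not> h y \<le> 0"
      then have hp: "h y > 0" by simp
      define t where "t = min (y/2) (h y / (2*K))"
      have t: "0 < t" "t < y" using y hp K by (auto simp: t_def)
      have "t^(d-2) \<le> t^1" using t y \<delta> d by (intro power_decreasing) auto
      then have "K * t^(d-2) \<le> K * t" using K by simp
      also have "\<dots> \<le> K * (h y / (2*K))" using K by (intro mult_left_mono) (auto simp: t_def)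
      also have "\<dots> < h y" using K hp by simp
      finally have "h t < h y" using up[of t] t y by simp
      moreover have "h y < h t" using hdec[of t y] t y by simp
      ultimately show False by simp
    qed
  qed
  have hneg: "h y < 0" if y: "0<y" "y<\<delta>" for y
    using hdec[of "y/2" y] hle[of "y/2"] y by simp
  show ?thesis
  proof (intro exI[of _ "min \<delta> (1/(K+1))"] conjI allI impI)
    show "0 < min \<delta> (1/(K+1))" "min \<delta> (1/(K+1)) \<le> 1/2" using \<delta> K by auto
    fix y assume y: "0 < y \<and> y < min \<delta> (1/(K+1))"
    then have y0: "0 < y" "y < \<delta>" "y < 1/(K+1)" by auto
    have y1: "0 < y" "y < 1" using y0 tl by auto
    have wp: "w y > 0" using w_pos[OF y1(1) y1(2)] .
    show "u' y < 0" using hneg[OF y0(1,2)] wp by (simp add: h_def mult_less_0_iff)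
    show "u y < 1" using hb[OF y0(1,2)] by simp
    have u2: "u y \<ge> 1/2" using hb[OF y0(1,2)] by simp
    have "K * y < 1" using y0 K by (simp add: field_simps)
    moreover have "y * \<bar>u' y\<bar> \<le> y * (K * y)" using ub[OF y0(1,2)] y0 by (intro mult_left_mono) auto
    moreover have "y * (K*y) \<le> K * y" using y1 K by (simp add: mult_le_cancel_right1 less_imp_le)
    moreover have "- (y * \<bar>u' y\<bar>) \<le> y * u' y" using y1 mult_left_mono[of "-\<bar>u' y\<bar>" "u' y" y] by simp
    ultimately show "y * u' y + 3 * u y > 0" using u2 by linarith
  qed
qed

definition "g y = y * u' y + 3 * u y"

lemma g_deriv: "0 < y \<Longrightarrow> y < 1 \<Longrightarrow> (g has_real_derivative (4 * u' y + y * u'' y)) (at y)"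
proof -
  assume y: "0 < y" "y < 1"
  have du: "(u has_real_derivative u' y) (at y)" "(u' has_real_derivative u'' y) (at y)" using d1 d2 y by auto
  show ?thesis unfolding g_def[abs_def]
    using du by (auto intro!: derivative_eq_intros simp: algebra_simps)
qed

lemma g_cont: "0 < y \<Longrightarrow> y < 1 \<Longrightarrow> isCont g y"
  using g_deriv DERIV_isCont by blast
lemma u'_cont: "0 < y \<Longrightarrow> y < 1 \<Longrightarrow> isCont u' y"
  using d2 DERIV_isCont by auto

lemma cube_u: "0 < y \<Longrightarrow> y < 1 \<Longrightarrow> ((\<lambda>t. t^3 * u t) has_real_derivative y\<^sup>2 * g y) (at y)"
proof -
  assume y: "0 < y" "y < 1"
  have du: "(u has_real_derivative u' y) (at y)" using d1 y by auto
  show ?thesis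
    using du by (auto intro!: derivative_eq_intros simp: g_def algebra_simps power2_eq_square power3_eq_cube)
qed

lemma gprime_pos:
  assumes y: "0 < y" "y < 1" and g0: "g y = 0" and up: "u y > 0"
  shows "4 * u' y + y * u'' y > 0"
proof -
  define s where "s = 1 - y\<^sup>2"
  have s: "s > 0" "s \<le> 1" using y by (auto simp: s_def abs_square_less_1)
  have o: "y\<^sup>2 * (1 - y\<^sup>2) * u'' y + ((real d - 3) * y - 2 * y ^ 3) * u' y
        + (real d - 2) * u y * (1 - (u y)\<^sup>2) = 0" using ode y by auto
  have p: "y * u' y = - 3 * u y" using g0 by (simp add: g_def)
  have e1: "y * (4 * u' y + y * u'' y) * s = 4 * (y * u' y) * s + y\<^sup>2 * (1 - y\<^sup>2) * u'' y"
    by (simp add: s_def algebra_simps power2_eq_square)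
  have e2: "y\<^sup>2 * (1 - y\<^sup>2) * u'' y = - ((real d - 3) - 2 * y\<^sup>2) * (y * u' y) - (real d - 2) * u y * (1 - (u y)\<^sup>2)"
    using o by (simp add: algebra_simps power2_eq_square power3_eq_cube)
  have e3: "y * (4 * u' y + y * u'' y) * s = u y * (3 * real d - 15 - 6 * s - (real d - 2) * (1 - (u y)\<^sup>2))"
    unfolding e1 e2 p by (simp add: s_def algebra_simps power2_eq_square)
  have "(real d - 2) * (1 - (u y)\<^sup>2) \<le> (real d - 2) * 1" using d by (intro mult_left_mono) auto
  then have "(real d - 2) * (1 - (u y)\<^sup>2) \<le> real d - 2" by simp
  moreover have "real d \<ge> 10" using d by simp
  ultimately have "3 * real d - 15 - 6 * s - (real d - 2) * (1 - (u y)\<^sup>2) > 0" using s by linarith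
  then have "y * (4 * u' y + y * u'' y) * s > 0" unfolding e3 using up by simp
  then show ?thesis using y s by (simp add: zero_less_mult_iff)
qed

lemma global:
  assumes y: "0 < y" "y < 1"
  shows "u' y < 0 \<and> g y > 0"
proof (rule ccontr)
  assume ny: "\<not> (u' y < 0 \<and> g y > 0)"
  obtain \<delta> where \<delta>: "\<delta>>0" "\<delta> \<le> 1/2" and h\<delta>: "\<And>y. 0 < y \<Longrightarrow> y < \<delta> \<Longrightarrow>
      u' y < 0 \<and> y * u' y + 3 * u y > 0 \<and> u y < 1"
    using near0_full by blast
  define S where "S = {t. 0 < t \<and> t < 1 \<and> \<not> (u' t < 0 \<and> g t > 0)}"
  have yS: "y \<in> S" using y ny by (simp add: S_def)
  have Slow: "\<delta> \<le> s" if "s \<in> S" for s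
  proof (rule ccontr)
    assume "\<not> \<delta> \<le> s"
    then show False using h\<delta>[of s] that by (auto simp: S_def g_def)
  qed
  define ys where "ys = Inf S"
  have bdd: "bdd_below S" using Slow by (auto simp: bdd_below_def)
  have ys_le: "ys \<le> s" if "s \<in> S" for s using cInf_lower[OF that bdd] by (simp add: ys_def)
  have ys_ge: "\<delta> \<le> ys" unfolding ys_def using yS Slow by (intro cInf_greatest) auto
  have ys1: "ys < 1" using ys_le[OF yS] y by simp
  have ys0: "0 < ys" using ys_ge \<delta> by simp
  have before: "u' t < 0 \<and> g t > 0" if t: "0 < t" "t < ys" for t
  proof (rule ccontr)
    assume "\<not> (u' t < 0 \<and> g t > 0)"
    then have "t \<in> S" using t ys1 by (simp add: S_def)
    then show False using ys_le[of t] t by simp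
  qed
  have tu: "(u' \<longlongrightarrow> u' ys) (at ys)" using u'_cont[OF ys0 ys1] by (simp add: isCont_def)
  have tg: "(g \<longlongrightarrow> g ys) (at ys)" using g_cont[OF ys0 ys1] by (simp add: isCont_def)
  have A: "u' ys \<le> 0"
  proof (rule ccontr)
    assume "\<not> u' ys \<le> 0"
    then have "eventually (\<lambda>t. u' t > 0) (at ys)" using order_tendstoD(1)[OF tu, of 0] by simp
    then obtain t where "0 < t" "t < ys" "u' t > 0" using ev_left_pt ys0 by blast
    then show False using before by fastforce
  qed
  have B: "g ys \<ge> 0"
  proof (rule ccontr)
    assume "\<not> g ys \<ge> 0"
    then have "eventually (\<lambda>t. g t < 0) (at ys)" using order_tendstoD(2)[OF tg, of 0] by simp
    then obtain t where "0 < t" "t < ys" "g t < 0" using ev_left_pt ys0 by blast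
    then show False using before by fastforce
  qed
  have C: "\<not> (u' ys < 0 \<and> g ys > 0)"
  proof
    assume P: "u' ys < 0 \<and> g ys > 0"
    have "eventually (\<lambda>t. u' t < 0 \<and> g t > 0) (at ys)"
      using order_tendstoD(2)[OF tu, of 0] order_tendstoD(1)[OF tg, of 0] P by (auto intro: eventually_conj)
    then obtain e where e: "e > 0" and he: "\<And>t. ys < t \<Longrightarrow> t < ys + e \<Longrightarrow> u' t < 0 \<and> g t > 0"
      using ev_right_int by blast
    have "ys + e \<le> s" if s: "s \<in> S" for s
    proof (rule ccontr)
      assume "\<not> ys + e \<le> s"
      moreover have "ys \<le> s" using ys_le[OF s] .
      moreover have "s \<noteq> ys" using s P by (auto simp: S_def)
      ultimately have "u' s < 0 \<and> g s > 0" using he[of s] by simp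
      then show False using s by (simp add: S_def)
    qed
    then have "ys + e \<le> ys" unfolding ys_def using yS by (intro cInf_greatest) auto
    then show False using e by simp
  qed
  define y0 where "y0 = ys / 2"
  have y0: "0 < y0" "y0 < ys" using ys0 by (auto simp: y0_def)
  have uy0: "u y0 > 0"
  proof -
    have "y0 * u' y0 < 0" using before[OF y0] y0 by (simp add: mult_pos_neg)
    then show ?thesis using before[OF y0] by (simp add: g_def)
  qed
  have "(\<lambda>t. t^3 * u t) y0 \<le> (\<lambda>t. t^3 * u t) ys"
  proof (rule DERIV_nonneg_imp_nondecreasing[where f="\<lambda>t. t^3 * u t"])
    show "y0 \<le> ys" using y0 by simp
    fix x assume x: "y0 \<le> x" "x \<le> ys"
    have x0: "0 < x" "x < 1" using x y0 ys1 by auto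
    have "g x \<ge> 0" using before[of x] B x x0 by (cases "x = ys") auto
    then show "\<exists>y. ((\<lambda>t. t^3 * u t) has_real_derivative y) (at x) \<and> 0 \<le> y"
      using cube_u[OF x0] by auto
  qed
  then have "y0^3 * u y0 \<le> ys^3 * u ys" by simp
  moreover have "y0^3 * u y0 > 0" using y0 uy0 by simp
  ultimately have uys: "u ys > 0" using ys0 by (smt (verit) mult_nonneg_nonpos zero_le_power)
  define t where "t = min (\<delta>/2) (ys/2)"
  have t: "0 < t" "t < \<delta>" "t < ys" using \<delta> ys0 by (auto simp: t_def)
  have "u ys \<le> u t"
  proof (rule DERIV_nonpos_imp_nonincreasing[of t ys u])
    show "t \<le> ys" using t by simp
    fix x assume x: "t \<le> x" "x \<le> ys"
    have x0: "0 < x" "x < 1" using x t ys1 by auto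
    have "u' x \<le> 0" using before[of x] A x x0 by (cases "x = ys") auto
    then show "\<exists>y. (u has_real_derivative y) (at x) \<and> y \<le> 0" using d1 x0 by auto
  qed
  then have uys1: "u ys < 1" using h\<delta>[OF t(1,2)] by simp
  show False
  proof (cases "u' ys = 0")
    case True
    have o: "ys\<^sup>2 * (1 - ys\<^sup>2) * u'' ys + (real d - 2) * u ys * (1 - (u ys)\<^sup>2) = 0"
      using ode[of ys] ys0 ys1 True by simp
    have q: "(real d - 2) * u ys * (1 - (u ys)\<^sup>2) > 0"
    proof -
      have "(u ys)\<^sup>2 < 1" using uys uys1 by (simp add: abs_square_less_1)
      then show ?thesis using d uys by simp
    qed
    have pp: "ys\<^sup>2 * (1 - ys\<^sup>2) > 0" using ys0 ys1 by (simp add: abs_square_less_1)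
    have "ys\<^sup>2 * (1 - ys\<^sup>2) * u'' ys < 0" using o q by linarith
    then have u2: "u'' ys < 0"
    proof (rule contrapos_pp)
      assume "\<not> u'' ys < 0"
      then have "u'' ys \<ge> 0" by simp
      then show "\<not> ys\<^sup>2 * (1 - ys\<^sup>2) * u'' ys < 0" using pp by (simp add: not_less)
    qed
    obtain dd where dd: "dd > 0" and hd: "\<forall>h>0. h < dd \<longrightarrow> u' ys < u' (ys - h)"
      using DERIV_neg_dec_left[OF d2[of ys] u2] ys0 ys1 by auto
    define hh where "hh = min (dd/2) (ys/2)"
    have hh: "0 < hh" "hh < dd" "hh < ys" using dd ys0 by (auto simp: hh_def)
    have "u' (ys - hh) > 0" using hd hh True by auto
    moreover have "u' (ys - hh) < 0" using before[of "ys - hh"] hh by auto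
    ultimately show False by simp
  next
    case False
    then have un: "u' ys < 0" using A by simp
    then have g0: "g ys = 0" using B C by simp
    have gp: "4 * u' ys + ys * u'' ys > 0" using gprime_pos[OF ys0 ys1 g0 uys] .
    obtain dd where dd: "dd > 0" and hd: "\<forall>h>0. h < dd \<longrightarrow> g (ys - h) < g ys"
      using DERIV_pos_inc_left[OF g_deriv[OF ys0 ys1] gp] by auto
    define hh where "hh = min (dd/2) (ys/2)"
    have hh: "0 < hh" "hh < dd" "hh < ys" using dd ys0 by (auto simp: hh_def)
    have "g (ys - hh) < 0" using hd hh g0 by auto
    moreover have "g (ys - hh) > 0" using before[of "ys - hh"] hh by auto
    ultimately show False by simp
  qed
qed

lemma udec: "0 < x \<Longrightarrow> x < y \<Longrightarrow> y < 1 \<Longrightarrow> u y < u x"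
proof (rule DERIV_neg_imp_decreasing[of x y u])
  fix z assume "0 < x" "x < y" "y < 1" "x \<le> z" "z \<le> y"
  then have z: "0 < z" "z < 1" by auto
  show "\<exists>l. (u has_real_derivative l) (at z) \<and> l < 0"
    using d1 global[OF z] z by (intro exI[of _ "u' z"]) auto
qed

lemma ult1: "0 < y \<Longrightarrow> y < 1 \<Longrightarrow> u y < 1"
proof -
  assume y: "0 < y" "y < 1"
  obtain \<delta> where \<delta>: "\<delta>>0" and h\<delta>: "\<And>y. 0 < y \<Longrightarrow> y < \<delta> \<Longrightarrow> u y < 1"
    using near0_full by blast
  define t where "t = min (\<delta>/2) (y/2)"
  have t: "0 < t" "t < \<delta>" "t < y" using \<delta> y by (auto simp: t_def)
  show ?thesis using udec[OF t(1) t(3) y(2)] h\<delta>[OF t(1,2)] by simp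
qed

lemma upos: "0 < y \<Longrightarrow> y < 1 \<Longrightarrow> u y > 0"
proof -
  assume y: "0 < y" "y < 1"
  have "y * u' y < 0" using global[OF y] y by (simp add: mult_pos_neg)
  then show ?thesis using global[OF y] by (simp add: g_def)
qed

lemma ulow: "0 < y \<Longrightarrow> y < 1 \<Longrightarrow> u y \<ge> u (1/2) / 8"
proof -
  assume y: "0 < y" "y < 1"
  have u2: "u (1/2) > 0" using upos by simp
  show ?thesis
  proof (cases "y \<le> 1/2")
    case True
    have "u y \<ge> u (1/2)"
    proof (cases "y = 1/2")
      case False
      then show ?thesis using udec[of y "1/2"] y True by simp
    next
      case True
      show ?thesis by (subst True) simp
    qed
    then show ?thesis using u2 by simp
  next
    case False
    have "(\<lambda>t. t^3 * u t) (1/2) \<le> (\<lambda>t. t^3 * u t) y"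
    proof (rule DERIV_nonneg_imp_nondecreasing[where f="\<lambda>t. t^3 * u t"])
      show "1/2 \<le> y" using False by simp
      fix x assume x: "1/2 \<le> x" "x \<le> y"
      have x0: "0 < x" "x < 1" using x y by auto
      have "g x \<ge> 0" using global[OF x0] by simp
      then show "\<exists>z. ((\<lambda>t. t^3 * u t) has_real_derivative z) (at x) \<and> 0 \<le> z"
        using cube_u[OF x0] by auto
    qed
    then have "u (1/2) / 8 \<le> y^3 * u y" by (simp add: power3_eq_cube)
    also have "\<dots> \<le> 1 * u y" using upos[OF y] y by (intro mult_right_mono) (auto simp: power_le_one)
    finally show ?thesis by simp
  qed
qed

lemma main:
  shows "(\<forall>x\<in>{0..<1}. \<forall>y\<in>{0..<1}. x \<le> y \<longrightarrow> u y \<le> u x)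
         \<and> (\<exists>L. (u \<longlongrightarrow> L) (at_left 1) \<and> L > 0)"
proof
  show "\<forall>x\<in>{0..<1}. \<forall>y\<in>{0..<1}. x \<le> y \<longrightarrow> u y \<le> u x"
  proof (intro ballI impI)
    fix x y :: real assume x: "x \<in> {0..<1}" and y: "y \<in> {0..<1}" and xy: "x \<le> y"
    show "u y \<le> u x"
    proof (cases "x = y")
      case False
      then have xy': "x < y" using xy by simp
      show ?thesis
      proof (cases "x = 0")
        case True
        then show ?thesis using ult1[of y] xy' y u0 by simp
      next
        case False
        then show ?thesis using udec[of x y] x y xy' by simp
      qed
    qed simp
  qed
  define L where "L = Inf (u ` {0<..<1})"
  have bdd: "bdd_below (u ` {0<..<1})" unfolding bdd_below_def
    by (rule exI[of _ "u (1/2) / 8"]) (use ulow in auto)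
  have Lge: "L \<ge> u (1/2) / 8" unfolding L_def using ulow by (intro cInf_greatest) auto
  have u2: "u (1/2) > 0" using upos by simp
  have "(u \<longlongrightarrow> L) (at_left 1)"
  proof (rule decreasing_tendsto)
    have ev: "eventually (\<lambda>t. t \<in> {0<..<1}) (at_left (1::real))" by (rule eventually_at_left_real) simp
    show "eventually (\<lambda>t. L \<le> u t) (at_left 1)"
      by (rule eventually_mono[OF ev]) (metis L_def bdd cInf_lower imageI)
    fix x assume "L < x"
    then obtain s where s: "s \<in> {0<..<1}" "u s < x"
      unfolding L_def using cInf_less_iff[of "u ` {0<..<1}" x] bdd by auto
    have ev2: "eventually (\<lambda>t. t \<in> {s<..<1}) (at_left (1::real))" by (rule eventually_at_left_real) (use s in auto)
    show "eventually (\<lambda>t. u t < x) (at_left 1)"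
    proof (rule eventually_mono[OF ev2])
      fix t assume "t \<in> {s<..<1}"
      then have "u t < u s" using udec[of s t] s by auto
      then show "u t < x" using s by simp
    qed
  qed
  then show "\<exists>L. (u \<longlongrightarrow> L) (at_left 1) \<and> L > 0" using Lge u2 by (intro exI[of _ L]) auto
qed

end


theorem lemma1:
  fixes d :: nat and a :: real and u u' u'' :: "real \<Rightarrow> real"
  assumes d: "d \<ge> 10" and a: "a > 0"
    and u0: "u 0 = 1"
    and d1: "\<And>y. y \<in> {0<..<1} \<Longrightarrow> (u has_real_derivative u' y) (at y)"
    and d2: "\<And>y. y \<in> {0<..<1} \<Longrightarrow> (u' has_real_derivative u'' y) (at y)"
    and ode: "\<And>y. y \<in> {0<..<1} \<Longrightarrow>
      y\<^sup>2 * (1 - y\<^sup>2) * u'' y + ((real d - 3) * y - 2 * y ^ 3) * u' y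
        + (real d - 2) * u y * (1 - (u y)\<^sup>2) = 0"
    and expn: "(\<lambda>y. u y - (1 - a * y\<^sup>2)) \<in> O[at_right 0](\<lambda>y. y ^ 4)"
  shows "(\<forall>x\<in>{0..<1}. \<forall>y\<in>{0..<1}. x \<le> y \<longrightarrow> u y \<le> u x)
         \<and> (\<exists>L. (u \<longlongrightarrow> L) (at_left 1) \<and> L > 0)"
proof -
  interpret ym d a u u' u''
    by unfold_locales (use assms in auto)
  show ?thesis by (rule main)
qed

end
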